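(* For every $i\ge1$, in $\mathcal W_m(q,\mu)$ with $m\ge 2i+1$: $$c^{(2i)}\,\sigma_{2i}\,c^{(2i)}=\eta^{-1}\mu^{-1}c^{(2i)},\qquad c^{(2i)}\,\kappa_{2i}\,c^{(2i)}=\eta^{-1}c^{(2i)}.$$
   Context: Fix $q\in\mathbb C\setminus\{0,\pm1\}$, $\mu\in\mathbb C\setminus\{0,q,-q^{-1}\}$. Braid group $\mathcal B_n$: generators $\sigma_1,\dots,\sigma_{n-1}$, relations $\sigma_i\sigma_{i+1}\sigma_i=\sigma_{i+1}\sigma_i\sigma_{i+1}$, $\sigma_i\sigma_j=\sigma_j\sigma_i$ ($|i-j|>1$). With $\kappa_i:=\frac{(q-\sigma_i)(q^{-1}+\sigma_i)}{\mu(q-q^{-1})}$, the BMW algebra $\mathcal W_n(q,\mu)$ is $\mathbb C\mathcal B_n$ modulo $\sigma_i\kappa_i=\kappa_i\sigma_i=\mu\kappa_i$, $\kappa_i\sigma_{i+1}^{\epsilon}\kappa_i=\mu^{-\epsilon}\kappa_i$ ($\epsilon=\pm1$). $\eta:=\frac{(q-\mu)(q^{-1}+\mu)}{\mu(q-q^{-1})}$. Elements of $\mathcal W_n$ are viewed in $\mathcal W_m$, $m>n$, via $\sigma_i\mapsto\sigma_i$; for $\alpha\in\mathcal W_n$, $\alpha^{\uparrow k}\in\mathcal W_{n+k}$ is its image under $\sigma_i\mapsto\sigma_{i+k}$. Contractors: $c^{(2)}:=\eta^{-1}\kappa_1$, $c^{(2i+2)}:=c^{(2i)\uparrow1}\kappa_1\kappa_{2i+1}c^{(2i)\uparrow1}$.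 *)

theory Defs
  imports Complex_Main
begin

text \<open>Terms of the free unital associative complex algebra on generators
  sigma_j and sigma_j^-1 (j a natural number).\<close>
datatype bexpr = Sg nat | SgInv nat | Sc complex | Pl bexpr bexpr | Tm bexpr bexpr

fun bshift :: "nat \<Rightarrow> bexpr \<Rightarrow> bexpr" where
  "bshift k (Sg j) = Sg (j + k)"
| "bshift k (SgInv j) = SgInv (j + k)"
| "bshift k (Sc c) = Sc c"
| "bshift k (Pl x y) = Pl (bshift k x) (bshift k y)"
| "bshift k (Tm x y) = Tm (bshift k x) (bshift k y)"

definition bkappa :: "complex \<Rightarrow> complex \<Rightarrow> nat \<Rightarrow> bexpr" where
  "bkappa q \<mu> j = Tm (Sc (1 / (\<mu> * (q - 1/q))))
      (Tm (Pl (Sc q) (Tm (Sc (-1)) (Sg j))) (Pl (Sc (1/q)) (Sg j)))"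

definition beta :: "complex \<Rightarrow> complex \<Rightarrow> complex" where
  "beta q \<mu> = (q - \<mu>) * (1/q + \<mu>) / (\<mu> * (q - 1/q))"

text \<open>Contractors: bcontr q mu i = c^{(2i)} for i \<ge> 1 (value at i = 0 is irrelevant).\<close>
fun bcontr :: "complex \<Rightarrow> complex \<Rightarrow> nat \<Rightarrow> bexpr" where
  "bcontr q \<mu> 0 = Sc 1"
| "bcontr q \<mu> (Suc 0) = Tm (Sc (1 / beta q \<mu>)) (bkappa q \<mu> 1)"
| "bcontr q \<mu> (Suc (Suc n)) =
     Tm (Tm (Tm (bshift 1 (bcontr q \<mu> (Suc n))) (bkappa q \<mu> 1))
            (bkappa q \<mu> (2 * Suc n + 1)))
        (bshift 1 (bcontr q \<mu> (Suc n)))"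

text \<open>Equality in the BMW algebra W_m(q,mu): the smallest congruence of complex
  algebras on terms containing the defining relations of C B_m and of W_m.\<close>
inductive bmw_eq :: "complex \<Rightarrow> complex \<Rightarrow> nat \<Rightarrow> bexpr \<Rightarrow> bexpr \<Rightarrow> bool"
  for q \<mu> :: complex and m :: nat where
  refl: "bmw_eq q \<mu> m x x"
| sym: "bmw_eq q \<mu> m x y \<Longrightarrow> bmw_eq q \<mu> m y x"
| trans: "bmw_eq q \<mu> m x y \<Longrightarrow> bmw_eq q \<mu> m y z \<Longrightarrow> bmw_eq q \<mu> m x z"
| cong_Pl: "bmw_eq q \<mu> m x x' \<Longrightarrow> bmw_eq q \<mu> m y y' \<Longrightarrow> bmw_eq q \<mu> m (Pl x y) (Pl x' y')"
| cong_Tm: "bmw_eq q \<mu> m x x' \<Longrightarrow> bmw_eq q \<mu> m y y' \<Longrightarrow> bmw_eq q \<mu> m (Tm x y) (Tm x' y')"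
| pl_assoc: "bmw_eq q \<mu> m (Pl (Pl x y) z) (Pl x (Pl y z))"
| pl_comm: "bmw_eq q \<mu> m (Pl x y) (Pl y x)"
| pl_zero: "bmw_eq q \<mu> m (Pl x (Sc 0)) x"
| pl_neg: "bmw_eq q \<mu> m (Pl x (Tm (Sc (-1)) x)) (Sc 0)"
| tm_assoc: "bmw_eq q \<mu> m (Tm (Tm x y) z) (Tm x (Tm y z))"
| tm_one_l: "bmw_eq q \<mu> m (Tm (Sc 1) x) x"
| tm_one_r: "bmw_eq q \<mu> m (Tm x (Sc 1)) x"
| distr_l: "bmw_eq q \<mu> m (Tm x (Pl y z)) (Pl (Tm x y) (Tm x z))"
| distr_r: "bmw_eq q \<mu> m (Tm (Pl x y) z) (Pl (Tm x z) (Tm y z))"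
| sc_add: "bmw_eq q \<mu> m (Pl (Sc a) (Sc b)) (Sc (a + b))"
| sc_mult: "bmw_eq q \<mu> m (Tm (Sc a) (Sc b)) (Sc (a * b))"
| sc_central: "bmw_eq q \<mu> m (Tm (Sc a) x) (Tm x (Sc a))"
| inv_r: "1 \<le> j \<Longrightarrow> j < m \<Longrightarrow> bmw_eq q \<mu> m (Tm (Sg j) (SgInv j)) (Sc 1)"
| inv_l: "1 \<le> j \<Longrightarrow> j < m \<Longrightarrow> bmw_eq q \<mu> m (Tm (SgInv j) (Sg j)) (Sc 1)"
| braid: "1 \<le> j \<Longrightarrow> j + 1 < m \<Longrightarrow>
     bmw_eq q \<mu> m (Tm (Tm (Sg j) (Sg (j+1))) (Sg j)) (Tm (Tm (Sg (j+1)) (Sg j)) (Sg (j+1)))"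
| far: "1 \<le> i \<Longrightarrow> i < m \<Longrightarrow> 1 \<le> j \<Longrightarrow> j < m \<Longrightarrow> i + 1 < j \<Longrightarrow>
     bmw_eq q \<mu> m (Tm (Sg i) (Sg j)) (Tm (Sg j) (Sg i))"
| sk: "1 \<le> j \<Longrightarrow> j < m \<Longrightarrow>
     bmw_eq q \<mu> m (Tm (Sg j) (bkappa q \<mu> j)) (Tm (Sc \<mu>) (bkappa q \<mu> j))"
| ks: "1 \<le> j \<Longrightarrow> j < m \<Longrightarrow>
     bmw_eq q \<mu> m (Tm (bkappa q \<mu> j) (Sg j)) (Tm (Sc \<mu>) (bkappa q \<mu> j))"
| ksk_pos: "1 \<le> j \<Longrightarrow> j + 1 < m \<Longrightarrow>
     bmw_eq q \<mu> m (Tm (Tm (bkappa q \<mu> j) (Sg (j+1))) (bkappa q \<mu> j)) (Tm (Sc (1/\<mu>)) (bkappa q \<mu> j))"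
| ksk_neg: "1 \<le> j \<Longrightarrow> j + 1 < m \<Longrightarrow>
     bmw_eq q \<mu> m (Tm (Tm (bkappa q \<mu> j) (SgInv (j+1))) (bkappa q \<mu> j)) (Tm (Sc \<mu>) (bkappa q \<mu> j))"

end

theory Submission
  imports Defs
begin

lemma bshift_bshift[simp]: "bshift a (bshift b x) = bshift (b + a) x"
  by (induction x) (auto simp: algebra_simps)
lemma bshift_0[simp]: "bshift 0 x = x"
  by (induction x) auto
lemma bshift_kappa[simp]: "bshift k (bkappa q \<mu> j) = bkappa q \<mu> (j + k)"
  by (simp add: bkappa_def)

definition Pr :: "bexpr list \<Rightarrow> bexpr" where "Pr xs = foldr Tm xs (Sc 1)"
lemma Pr_simps[simp]: "Pr [] = Sc 1" "Pr (x # xs) = Tm x (Pr xs)"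
  by (simp_all add: Pr_def)

fun okg :: "nat set \<Rightarrow> bexpr \<Rightarrow> bool" where
  "okg A (Sg j) = (j \<in> A)"
| "okg A (SgInv j) = False"
| "okg A (Sc c) = True"
| "okg A (Pl x y) = (okg A x \<and> okg A y)"
| "okg A (Tm x y) = (okg A x \<and> okg A y)"

lemma okg_mono: "okg A x \<Longrightarrow> A \<subseteq> B \<Longrightarrow> okg B x"
  by (induction x) auto
lemma okg_shift: "okg {a..<b} x \<Longrightarrow> okg {a+k..<b+k} (bshift k x)"
  by (induction x) auto
lemma okg_kappa[simp]: "okg A (bkappa q \<mu> j) = (j \<in> A)"
  by (simp add: bkappa_def)
lemma okg_bcontr: "okg {1..<2*i} (bcontr q \<mu> i)"
proof (induction q \<mu> i rule: bcontr.induct)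
  case (3 q \<mu> n)
  have "okg {1..<2 * Suc (Suc n)} (bshift 1 (bcontr q \<mu> (Suc n)))"
    by (rule okg_mono[OF okg_shift[OF "3.IH"(1), of 1]]) auto
  then show ?case by simp
qed auto
lemma okg_C: "okg {k+1..<2*i+k} (bshift k (bcontr q \<mu> i))"
  using okg_shift[OF okg_bcontr, of k] by (simp add: add.commute)

definition far :: "nat set \<Rightarrow> nat set \<Rightarrow> nat \<Rightarrow> bool" where
  "far A B m = (\<forall>i\<in>A. \<forall>j\<in>B. 1\<le>i \<and> i<m \<and> 1\<le>j \<and> j<m \<and> (i+1<j \<or> j+1<i))"

definition sw :: "bexpr \<Rightarrow> bexpr \<Rightarrow> bexpr" where "sw k y = Tm (Tm k y) k"

context
  fixes q \<mu> :: complex and m :: nat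
begin

abbreviation eqv (infix "\<approx>" 50) where "x \<approx> y \<equiv> bmw_eq q \<mu> m x y"

declare bmw_eq.trans[trans]

lemma E_sym: "x \<approx> y \<Longrightarrow> y \<approx> x" by (rule bmw_eq.sym)
lemma E_refl: "x \<approx> x" by (rule bmw_eq.refl)
lemma cT: "x \<approx> x' \<Longrightarrow> y \<approx> y' \<Longrightarrow> Tm x y \<approx> Tm x' y'" by (rule bmw_eq.cong_Tm)
lemma cTl: "x \<approx> x' \<Longrightarrow> Tm x y \<approx> Tm x' y" by (rule bmw_eq.cong_Tm, assumption, rule E_refl)
lemma cTr: "y \<approx> y' \<Longrightarrow> Tm x y \<approx> Tm x y'" by (rule bmw_eq.cong_Tm, rule E_refl, assumption)
lemma cP: "x \<approx> x' \<Longrightarrow> y \<approx> y' \<Longrightarrow> Pl x y \<approx> Pl x' y'" by (rule bmw_eq.cong_Pl)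
lemma assoc: "Tm (Tm x y) z \<approx> Tm x (Tm y z)" by (rule bmw_eq.tm_assoc)
lemma assoc': "Tm x (Tm y z) \<approx> Tm (Tm x y) z" by (rule E_sym, rule bmw_eq.tm_assoc)

lemma sc_mul: "Tm (Sc a) (Tm (Sc b) x) \<approx> Tm (Sc (a*b)) x"
proof -
  have "Tm (Sc a) (Tm (Sc b) x) \<approx> Tm (Tm (Sc a) (Sc b)) x" by (rule assoc')
  also have "\<dots> \<approx> Tm (Sc (a*b)) x" by (rule cTl, rule bmw_eq.sc_mult)
  finally show ?thesis .
qed
lemma sc_pull_r: "Tm x (Tm (Sc a) y) \<approx> Tm (Sc a) (Tm x y)"
proof -
  have "Tm x (Tm (Sc a) y) \<approx> Tm (Tm x (Sc a)) y" by (rule assoc')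
  also have "\<dots> \<approx> Tm (Tm (Sc a) x) y" by (rule cTl, rule E_sym, rule bmw_eq.sc_central)
  also have "\<dots> \<approx> Tm (Sc a) (Tm x y)" by (rule assoc)
  finally show ?thesis .
qed
lemma sc_right: "Tm x (Sc a) \<approx> Tm (Sc a) x" by (rule E_sym, rule bmw_eq.sc_central)
lemma sc_comb: "Pl (Tm (Sc a) x) (Tm (Sc b) x) \<approx> Tm (Sc (a+b)) x"
proof -
  have "Pl (Tm (Sc a) x) (Tm (Sc b) x) \<approx> Tm (Pl (Sc a) (Sc b)) x" by (rule E_sym, rule bmw_eq.distr_r)
  also have "\<dots> \<approx> Tm (Sc (a+b)) x" by (rule cTl, rule bmw_eq.sc_add)
  finally show ?thesis .
qed
lemma sc_eq: "a = b \<Longrightarrow> Tm (Sc a) x \<approx> Tm (Sc b) x" by (simp add: E_refl)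
lemma sc_one: "Tm (Sc 1) x \<approx> x" by (rule bmw_eq.tm_one_l)

lemma lin_r: "Tm x y \<approx> Tm (Sc a) w \<Longrightarrow> Tm x z \<approx> Tm (Sc b) w \<Longrightarrow> Tm x (Pl y z) \<approx> Tm (Sc (a+b)) w"
  by (rule bmw_eq.trans[OF bmw_eq.distr_l], rule bmw_eq.trans[OF cP sc_comb])
lemma lin_l: "Tm y x \<approx> Tm (Sc a) w \<Longrightarrow> Tm z x \<approx> Tm (Sc b) w \<Longrightarrow> Tm (Pl y z) x \<approx> Tm (Sc (a+b)) w"
  by (rule bmw_eq.trans[OF bmw_eq.distr_r], rule bmw_eq.trans[OF cP sc_comb])

lemma eig1:
  assumes ev: "Tm x s \<approx> Tm (Sc c) x"
  shows "Tm x (Pl (Sc a) (Tm (Sc b) s)) \<approx> Tm (Sc (a + b*c)) x"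
proof (rule lin_r)
  show "Tm x (Sc a) \<approx> Tm (Sc a) x" by (rule sc_right)
  have "Tm x (Tm (Sc b) s) \<approx> Tm (Sc b) (Tm x s)" by (rule sc_pull_r)
  also have "\<dots> \<approx> Tm (Sc b) (Tm (Sc c) x)" by (rule cTr, rule ev)
  also have "\<dots> \<approx> Tm (Sc (b*c)) x" by (rule sc_mul)
  finally show "Tm x (Tm (Sc b) s) \<approx> Tm (Sc (b*c)) x" .
qed
lemma eig2:
  assumes ev: "Tm x s \<approx> Tm (Sc c) x"
  shows "Tm x (Pl (Sc a) s) \<approx> Tm (Sc (a + c)) x"
  by (rule lin_r[OF sc_right ev])

lemma R1_gen:
  assumes ev: "Tm x s \<approx> Tm (Sc \<mu>) x"
  shows "Tm x (Tm (Sc c) (Tm (Pl (Sc q) (Tm (Sc (-1)) s)) (Pl (Sc (1/q)) s)))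
     \<approx> Tm (Sc (c * ((q + -1*\<mu>) * (1/q + \<mu>)))) x"
proof -
  let ?A = "Pl (Sc q) (Tm (Sc (-1)) s)" and ?B = "Pl (Sc (1/q)) s"
  have "Tm x (Tm ?A ?B) \<approx> Tm (Tm x ?A) ?B" by (rule assoc')
  also have "\<dots> \<approx> Tm (Tm (Sc (q + -1*\<mu>)) x) ?B" by (rule cTl, rule eig1[OF ev])
  also have "\<dots> \<approx> Tm (Sc (q + -1*\<mu>)) (Tm x ?B)" by (rule assoc)
  also have "\<dots> \<approx> Tm (Sc (q + -1*\<mu>)) (Tm (Sc (1/q + \<mu>)) x)" by (rule cTr, rule eig2[OF ev])
  also have "\<dots> \<approx> Tm (Sc ((q + -1*\<mu>) * (1/q + \<mu>))) x" by (rule sc_mul)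
  finally have h: "Tm (Sc c) (Tm x (Tm ?A ?B)) \<approx> Tm (Sc c) (Tm (Sc ((q + -1*\<mu>) * (1/q + \<mu>))) x)"
    by (rule cTr)
  have "Tm x (Tm (Sc c) (Tm ?A ?B)) \<approx> Tm (Sc c) (Tm x (Tm ?A ?B))" by (rule sc_pull_r)
  also note h
  also have "Tm (Sc c) (Tm (Sc ((q + -1*\<mu>) * (1/q + \<mu>))) x) \<approx> Tm (Sc (c * ((q + -1*\<mu>) * (1/q + \<mu>)))) x" by (rule sc_mul)
  finally show ?thesis .
qed

lemma R1:
  assumes "1 \<le> j" "j < m"
  shows "Tm (bkappa q \<mu> j) (bkappa q \<mu> j) \<approx> Tm (Sc (beta q \<mu>)) (bkappa q \<mu> j)"
proof -
  have "Tm (bkappa q \<mu> j) (bkappa q \<mu> j) \<approx> Tm (Sc (1 / (\<mu> * (q - 1/q)) * ((q + -1*\<mu>) * (1/q + \<mu>)))) (bkappa q \<mu> j)"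
    apply (subst (2) bkappa_def)
    by (rule R1_gen, rule bmw_eq.ks[OF assms])
  also have "\<dots> \<approx> Tm (Sc (beta q \<mu>)) (bkappa q \<mu> j)"
    by (rule sc_eq) (simp add: beta_def)
  finally show ?thesis .
qed

lemma sw_cong: "y \<approx> y' \<Longrightarrow> sw k y \<approx> sw k y'"
  unfolding sw_def by (rule cTl, rule cTr)
lemma sw_sc: "sw k (Tm (Sc c) y) \<approx> Tm (Sc c) (sw k y)"
  unfolding sw_def by (rule bmw_eq.trans[OF cTl[OF sc_pull_r]], rule assoc)
lemma sw_sc': "sw k y \<approx> Tm (Sc a) k \<Longrightarrow> sw k (Tm (Sc c) y) \<approx> Tm (Sc (c*a)) k"
  by (rule bmw_eq.trans[OF sw_sc], rule bmw_eq.trans[OF cTr sc_mul])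
lemma sw_lin: "sw k y \<approx> Tm (Sc a) k \<Longrightarrow> sw k z \<approx> Tm (Sc b) k \<Longrightarrow> sw k (Pl y z) \<approx> Tm (Sc (a+b)) k"
  unfolding sw_def by (rule bmw_eq.trans[OF cTl[OF bmw_eq.distr_l]], rule lin_l)
lemma sw_scal: "Tm k k \<approx> Tm (Sc e) k \<Longrightarrow> sw k (Sc a) \<approx> Tm (Sc (a*e)) k"
  unfolding sw_def
  by (rule bmw_eq.trans[OF cTl[OF sc_right]], rule bmw_eq.trans[OF assoc],
      rule bmw_eq.trans[OF cTr sc_mul])

lemma kinv:
  assumes "\<mu> \<noteq> 0" "1 \<le> j" "j < m"
  shows "Tm (bkappa q \<mu> j) (SgInv j) \<approx> Tm (Sc (1/\<mu>)) (bkappa q \<mu> j)"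
proof -
  let ?k = "bkappa q \<mu> j"
  have "Tm (Sc (1/\<mu>)) ?k \<approx> Tm (Sc (1/\<mu>)) (Tm ?k (Sc 1))" by (rule cTr, rule E_sym, rule bmw_eq.tm_one_r)
  also have "\<dots> \<approx> Tm (Sc (1/\<mu>)) (Tm ?k (Tm (Sg j) (SgInv j)))" by (rule cTr, rule cTr, rule E_sym, rule bmw_eq.inv_r[OF assms(2,3)])
  also have "\<dots> \<approx> Tm (Sc (1/\<mu>)) (Tm (Tm ?k (Sg j)) (SgInv j))" by (rule cTr, rule assoc')
  also have "\<dots> \<approx> Tm (Sc (1/\<mu>)) (Tm (Tm (Sc \<mu>) ?k) (SgInv j))" by (rule cTr, rule cTl, rule bmw_eq.ks[OF assms(2,3)])
  also have "\<dots> \<approx> Tm (Sc (1/\<mu>)) (Tm (Sc \<mu>) (Tm ?k (SgInv j)))" by (rule cTr, rule assoc)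
  also have "\<dots> \<approx> Tm (Sc (1/\<mu> * \<mu>)) (Tm ?k (SgInv j))" by (rule sc_mul)
  also have "\<dots> \<approx> Tm (Sc 1) (Tm ?k (SgInv j))" by (rule sc_eq) (simp add: assms(1))
  also have "\<dots> \<approx> Tm ?k (SgInv j)" by (rule sc_one)
  finally show ?thesis by (rule E_sym)
qed

lemma R2:
  assumes q0: "q \<noteq> 0" and q1: "q \<noteq> 1" and q2: "q \<noteq> -1" and m0: "\<mu> \<noteq> 0"
    and j: "1 \<le> j" "j + 1 < m"
  shows "Tm (Tm (bkappa q \<mu> j) (bkappa q \<mu> (j+1))) (bkappa q \<mu> j) \<approx> bkappa q \<mu> j"
proof -
  let ?k = "bkappa q \<mu> j" and ?k' = "bkappa q \<mu> (j+1)"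
  let ?s = "Sg (j+1)" and ?t = "SgInv (j+1)"
  let ?e = "beta q \<mu>"
  let ?c = "1 / (\<mu> * (q - 1/q))"
  let ?A = "Pl (Sc q) (Tm (Sc (-1)) ?s)" and ?B = "Pl (Sc (1/q)) ?s"
  let ?W = "Pl (Tm (Sc (1/q)) ?t) (Sc 1)"
  have jm: "j < m" "1 \<le> j+1" "j+1 < m" using j by auto
  have kk: "Tm ?k ?k \<approx> Tm (Sc ?e) ?k" by (rule R1[OF j(1) jm(1)])
  have swS: "sw ?k ?s \<approx> Tm (Sc (1/\<mu>)) ?k" unfolding sw_def by (rule bmw_eq.ksk_pos[OF j])
  have swT: "sw ?k ?t \<approx> Tm (Sc \<mu>) ?k" unfolding sw_def by (rule bmw_eq.ksk_neg[OF j])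
  have sw1: "sw ?k (Sc a) \<approx> Tm (Sc (a * ?e)) ?k" for a by (rule sw_scal[OF kk])
  have Bt: "Tm ?B ?t \<approx> ?W"
  proof -
    have "Tm ?B ?t \<approx> Pl (Tm (Sc (1/q)) ?t) (Tm ?s ?t)" by (rule bmw_eq.distr_r)
    also have "\<dots> \<approx> ?W" by (rule cP, rule E_refl, rule bmw_eq.inv_r[OF jm(2,3)])
    finally show ?thesis .
  qed
  have swW: "sw ?k ?W \<approx> Tm (Sc ((1/q)*\<mu> + 1 * ?e)) ?k"
    by (rule sw_lin[OF sw_sc'[OF swT] sw1])
  have sW: "Tm ?s ?W \<approx> Pl (Tm (Sc (1/q)) (Sc 1)) ?s"
  proof -
    have "Tm ?s ?W \<approx> Pl (Tm ?s (Tm (Sc (1/q)) ?t)) (Tm ?s (Sc 1))" by (rule bmw_eq.distr_l)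
    also have "\<dots> \<approx> Pl (Tm (Sc (1/q)) (Sc 1)) ?s"
    proof (rule cP)
      have "Tm ?s (Tm (Sc (1/q)) ?t) \<approx> Tm (Sc (1/q)) (Tm ?s ?t)" by (rule sc_pull_r)
      also have "\<dots> \<approx> Tm (Sc (1/q)) (Sc 1)" by (rule cTr, rule bmw_eq.inv_r[OF jm(2,3)])
      finally show "Tm ?s (Tm (Sc (1/q)) ?t) \<approx> Tm (Sc (1/q)) (Sc 1)" .
      show "Tm ?s (Sc 1) \<approx> ?s" by (rule bmw_eq.tm_one_r)
    qed
    finally show ?thesis .
  qed
  have swsW: "sw ?k (Tm ?s ?W) \<approx> Tm (Sc ((1/q)*(1*?e) + 1/\<mu>)) ?k"
    by (rule bmw_eq.trans[OF sw_cong[OF sW]], rule sw_lin[OF sw_sc'[OF sw1] swS])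
  have AW: "Tm ?A ?W \<approx> Pl (Tm (Sc q) ?W) (Tm (Sc (-1)) (Tm ?s ?W))"
    by (rule bmw_eq.trans[OF bmw_eq.distr_r], rule cP, rule E_refl, rule assoc)
  let ?cz = "q * ((1/q)*\<mu> + 1 * ?e) + (-1) * ((1/q)*(1*?e) + 1/\<mu>)"
  have swAW: "sw ?k (Tm ?A ?W) \<approx> Tm (Sc ?cz) ?k"
    by (rule bmw_eq.trans[OF sw_cong[OF AW]], rule sw_lin[OF sw_sc'[OF swW] sw_sc'[OF swsW]])
  have kt: "Tm ?k' ?t \<approx> Tm (Sc ?c) (Tm ?A ?W)"
  proof -
    have "Tm ?k' ?t = Tm (Tm (Sc ?c) (Tm ?A ?B)) ?t" by (simp add: bkappa_def)
    also have "\<dots> \<approx> Tm (Sc ?c) (Tm (Tm ?A ?B) ?t)" by (rule assoc)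
    also have "\<dots> \<approx> Tm (Sc ?c) (Tm ?A (Tm ?B ?t))" by (rule cTr, rule assoc)
    also have "\<dots> \<approx> Tm (Sc ?c) (Tm ?A ?W)" by (rule cTr, rule cTr, rule Bt)
    finally show ?thesis .
  qed
  have main: "Tm (Sc (1/\<mu>)) (sw ?k ?k') \<approx> Tm (Sc (?c * ?cz)) ?k"
  proof -
    have "Tm (Sc (1/\<mu>)) (sw ?k ?k') \<approx> sw ?k (Tm (Sc (1/\<mu>)) ?k')" by (rule E_sym, rule sw_sc)
    also have "\<dots> \<approx> sw ?k (Tm ?k' ?t)" by (rule sw_cong, rule E_sym, rule kinv[OF m0 jm(2,3)])
    also have "\<dots> \<approx> sw ?k (Tm (Sc ?c) (Tm ?A ?W))" by (rule sw_cong, rule kt)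
    also have "\<dots> \<approx> Tm (Sc (?c * ?cz)) ?k" by (rule sw_sc'[OF swAW])
    finally show ?thesis .
  qed
  have ar: "\<mu> * (?c * ?cz) = 1"
  proof -
    have qq: "q - 1/q \<noteq> 0"
    proof
      assume "q - 1/q = 0"
      then have "q * q = 1" using q0 by (simp add: field_simps)
      then have "(q - 1) * (q + 1) = 0" by (simp add: algebra_simps)
      then show False using q1 q2 by (auto simp: add_eq_0_iff neg_equal_iff_equal minus_equation_iff)
    qed
    have z: "(q - 1/q) * ?e = 1/\<mu> + (q - 1/q) - \<mu>"
      using q0 m0 qq unfolding beta_def by (simp add: field_simps)
    have "?cz = (q - 1/q)"
    proof -
      have "?cz = \<mu> - 1/\<mu> + (q - 1/q) * ?e" using q0 by (simp add: algebra_simps)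
      then show ?thesis using z by simp
    qed
    then show ?thesis using qq m0 by simp

  qed
  have "sw ?k ?k' \<approx> Tm (Sc 1) (sw ?k ?k')" by (rule E_sym, rule sc_one)
  also have "\<dots> \<approx> Tm (Sc (\<mu> * (1/\<mu>))) (sw ?k ?k')" by (rule sc_eq) (simp add: m0)
  also have "\<dots> \<approx> Tm (Sc \<mu>) (Tm (Sc (1/\<mu>)) (sw ?k ?k'))" by (rule E_sym, rule sc_mul)
  also have "\<dots> \<approx> Tm (Sc \<mu>) (Tm (Sc (?c * ?cz)) ?k)" by (rule cTr, rule main)
  also have "\<dots> \<approx> Tm (Sc (\<mu> * (?c * ?cz))) ?k" by (rule sc_mul)
  also have "\<dots> \<approx> Tm (Sc 1) ?k" by (rule sc_eq, rule ar)
  also have "\<dots> \<approx> ?k" by (rule sc_one)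
  finally show ?thesis unfolding sw_def .
qed

lemma Pr_app: "Pr (xs @ ys) \<approx> Tm (Pr xs) (Pr ys)"
proof (induction xs)
  case Nil show ?case by (simp, rule E_sym, rule sc_one)
next
  case (Cons x xs)
  have "Pr ((x # xs) @ ys) \<approx> Tm x (Tm (Pr xs) (Pr ys))" by (simp, rule cTr, rule Cons)
  also have "\<dots> \<approx> Tm (Pr (x # xs)) (Pr ys)" by (simp, rule assoc')
  finally show ?case .
qed
lemma Pr_repl: "Pr u \<approx> Pr v \<Longrightarrow> Pr (pre @ u @ post) \<approx> Pr (pre @ v @ post)"
proof -
  assume h: "Pr u \<approx> Pr v"
  have "Pr (pre @ u @ post) \<approx> Tm (Pr pre) (Pr (u @ post))" by (rule Pr_app)
  also have "\<dots> \<approx> Tm (Pr pre) (Tm (Pr u) (Pr post))" by (rule cTr, rule Pr_app)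
  also have "\<dots> \<approx> Tm (Pr pre) (Tm (Pr v) (Pr post))" by (rule cTr, rule cTl, rule h)
  also have "\<dots> \<approx> Tm (Pr pre) (Pr (v @ post))" by (rule cTr, rule E_sym, rule Pr_app)
  also have "\<dots> \<approx> Pr (pre @ v @ post)" by (rule E_sym, rule Pr_app)
  finally show ?thesis .
qed
lemma Pr_repl': "Pr u \<approx> Pr v \<Longrightarrow> xs = pre @ u @ post \<Longrightarrow> ys = pre @ v @ post \<Longrightarrow> Pr xs \<approx> Pr ys"
  using Pr_repl by blast
lemma Pr1: "Pr [x] \<approx> x" by (simp, rule bmw_eq.tm_one_r)
lemma Pr2: "Pr [x, y] \<approx> Tm x y" by (simp, rule cTr, rule bmw_eq.tm_one_r)
lemma Pr3: "Pr [x, y, z] \<approx> Tm (Tm x y) z"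
  by (rule bmw_eq.trans[OF _ assoc'], simp, rule cTr, rule cTr, rule bmw_eq.tm_one_r)
lemma Pr4: "Pr [x, y, z, w] \<approx> Tm (Tm (Tm x y) z) w"
proof -
  have "Pr [x, y, z, w] \<approx> Tm x (Tm y (Tm z w))" by (simp, rule cTr, rule cTr, rule cTr, rule bmw_eq.tm_one_r)
  also have "\<dots> \<approx> Tm (Tm x y) (Tm z w)" by (rule assoc')
  also have "\<dots> \<approx> Tm (Tm (Tm x y) z) w" by (rule assoc')
  finally show ?thesis .
qed
lemma Pr_swap': "Tm x y \<approx> Tm y x \<Longrightarrow> xs = pre @ [x, y] @ post \<Longrightarrow> ys = pre @ [y, x] @ post \<Longrightarrow> Pr xs \<approx> Pr ys"
  by (rule Pr_repl', rule bmw_eq.trans[OF Pr2], rule bmw_eq.trans[OF _ E_sym[OF Pr2]])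
lemma Pr_sc: "Pr (pre @ Sc c # post) \<approx> Tm (Sc c) (Pr (pre @ post))"
proof (induction pre)
  case Nil show ?case by (simp, rule E_refl)
next
  case (Cons x pre)
  have "Pr ((x # pre) @ Sc c # post) \<approx> Tm x (Tm (Sc c) (Pr (pre @ post)))" by (simp, rule cTr, rule Cons)
  also have "\<dots> \<approx> Tm (Sc c) (Pr ((x # pre) @ post))" by (simp, rule sc_pull_r)
  finally show ?case .
qed
lemma Pr_sc': "xs = pre @ Sc c # post \<Longrightarrow> ys = pre @ post \<Longrightarrow> Pr xs \<approx> Tm (Sc c) (Pr ys)"
  using Pr_sc by blast
lemma sand: "c \<approx> Pr L \<Longrightarrow> Tm (Tm c y) c \<approx> Pr (L @ y # L)"
proof -
  assume h: "c \<approx> Pr L"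
  have "Tm (Tm c y) c \<approx> Tm (Tm (Pr L) (Pr [y])) (Pr L)" by (rule cT, rule cT, rule h, rule E_sym, rule Pr1, rule h)
  also have "\<dots> \<approx> Tm (Pr (L @ [y])) (Pr L)" by (rule cTl, rule E_sym, rule Pr_app)
  also have "\<dots> \<approx> Pr ((L @ [y]) @ L)" by (rule E_sym, rule Pr_app)
  finally show ?thesis by simp
qed
lemma sand2: "x \<approx> Pr L \<Longrightarrow> Tm (Tm a x) b \<approx> Pr (a # L @ [b])"
proof -
  assume h: "x \<approx> Pr L"
  have "Tm (Tm a x) b \<approx> Tm (Tm a (Pr L)) (Pr [b])" by (rule cT, rule cTr, rule h, rule E_sym, rule Pr1)
  also have "\<dots> = Tm (Pr (a # L)) (Pr [b])" by simp
  also have "\<dots> \<approx> Pr ((a # L) @ [b])" by (rule E_sym, rule Pr_app)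
  finally show ?thesis by simp
qed

lemma comm_Sg: "okg A x \<Longrightarrow> far A {j} m \<Longrightarrow> Tm x (Sg j) \<approx> Tm (Sg j) x"
proof (induction x)
  case (Sg i)
  then have "1 \<le> i" "i < m" "1 \<le> j" "j < m" "i + 1 < j \<or> j + 1 < i" by (auto simp: far_def)
  then show ?case using bmw_eq.far[of i m j q \<mu>] bmw_eq.far[of j m i q \<mu>] E_sym by auto
next
  case (Sc c) show ?case by (rule bmw_eq.sc_central)
next
  case (Pl x y)
  then have hx: "Tm x (Sg j) \<approx> Tm (Sg j) x" and hy: "Tm y (Sg j) \<approx> Tm (Sg j) y" by auto
  have "Tm (Pl x y) (Sg j) \<approx> Pl (Tm x (Sg j)) (Tm y (Sg j))" by (rule bmw_eq.distr_r)
  also have "\<dots> \<approx> Pl (Tm (Sg j) x) (Tm (Sg j) y)" by (rule cP[OF hx hy])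
  also have "\<dots> \<approx> Tm (Sg j) (Pl x y)" by (rule E_sym, rule bmw_eq.distr_l)
  finally show ?case .
next
  case (Tm x y)
  then have hx: "Tm x (Sg j) \<approx> Tm (Sg j) x" and hy: "Tm y (Sg j) \<approx> Tm (Sg j) y" by auto
  have "Tm (Tm x y) (Sg j) \<approx> Tm x (Tm y (Sg j))" by (rule assoc)
  also have "\<dots> \<approx> Tm x (Tm (Sg j) y)" by (rule cTr, rule hy)
  also have "\<dots> \<approx> Tm (Tm x (Sg j)) y" by (rule assoc')
  also have "\<dots> \<approx> Tm (Tm (Sg j) x) y" by (rule cTl, rule hx)
  also have "\<dots> \<approx> Tm (Sg j) (Tm x y)" by (rule assoc)
  finally show ?case .
qed simp

lemma comm: "okg B y \<Longrightarrow> okg A x \<Longrightarrow> far A B m \<Longrightarrow> Tm x y \<approx> Tm y x"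
proof (induction y)
  case (Sg j)
  then show ?case by (intro comm_Sg) (auto simp: far_def)
next
  case (Sc c) show ?case by (rule sc_right)
next
  case (Pl x1 x2)
  then have hx: "Tm x x1 \<approx> Tm x1 x" and hy: "Tm x x2 \<approx> Tm x2 x" by auto
  have "Tm x (Pl x1 x2) \<approx> Pl (Tm x x1) (Tm x x2)" by (rule bmw_eq.distr_l)
  also have "\<dots> \<approx> Pl (Tm x1 x) (Tm x2 x)" by (rule cP[OF hx hy])
  also have "\<dots> \<approx> Tm (Pl x1 x2) x" by (rule E_sym, rule bmw_eq.distr_r)
  finally show ?case .
next
  case (Tm y1 y2)
  then have h1: "Tm x y1 \<approx> Tm y1 x" and h2: "Tm x y2 \<approx> Tm y2 x" by auto
  have "Tm x (Tm y1 y2) \<approx> Tm (Tm x y1) y2" by (rule assoc')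
  also have "\<dots> \<approx> Tm (Tm y1 x) y2" by (rule cTl, rule h1)
  also have "\<dots> \<approx> Tm y1 (Tm x y2)" by (rule assoc)
  also have "\<dots> \<approx> Tm y1 (Tm y2 x)" by (rule cTr, rule h2)
  also have "\<dots> \<approx> Tm (Tm y1 y2) x" by (rule assoc')
  finally show ?case .
qed simp

lemma step_gen:
  assumes idem: "Tm X X \<approx> X"
  and T: "Tm (Tm ka X) ka \<approx> Tm (Sc e) (Tm ka Z)"
  and F3: "Tm Z X \<approx> X"
  and c1: "Tm ka kb \<approx> Tm kb ka" and c2: "Tm ka y \<approx> Tm y ka" and c3: "Tm X y \<approx> Tm y X"
  and c4: "Tm Z y \<approx> Tm y Z" and c5: "Tm Z kb \<approx> Tm kb Z"
  and F5: "Tm (Tm kb y) kb \<approx> Tm (Sc a) kb"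
  shows "Tm (Tm (Tm (Tm (Tm X ka) kb) X) y) (Tm (Tm (Tm X ka) kb) X)
     \<approx> Tm (Sc (e*a)) (Tm (Tm (Tm X ka) kb) X)"
proof -
  let ?C = "Tm (Tm (Tm X ka) kb) X"
  have C: "?C \<approx> Pr [X,ka,kb,X]" by (rule E_sym, rule Pr4)
  have P2: "Pr [u, v] \<approx> Pr [w]" if "Tm u v \<approx> w" for u v w
    by (rule bmw_eq.trans[OF Pr2], rule bmw_eq.trans[OF that E_sym[OF Pr1]])
  have P3: "Pr [u, v, w] \<approx> Pr L" if "Tm (Tm u v) w \<approx> Pr L" for u v w L
    by (rule bmw_eq.trans[OF Pr3 that])
  have T3: "Pr [ka,X,ka] \<approx> Pr [Sc e,ka,Z]"
  proof -
    have "Pr [ka,X,ka] \<approx> Tm (Tm ka X) ka" by (rule Pr3)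
    also have "\<dots> \<approx> Tm (Sc e) (Tm ka Z)" by (rule T)
    also have "\<dots> \<approx> Pr [Sc e,ka,Z]" by (simp, rule cTr, rule cTr, rule E_sym, rule bmw_eq.tm_one_r)
    finally show ?thesis .
  qed
  have F5': "Pr [kb,y,kb] \<approx> Pr [Sc a,kb]"
  proof -
    have "Pr [kb,y,kb] \<approx> Tm (Tm kb y) kb" by (rule Pr3)
    also have "\<dots> \<approx> Tm (Sc a) kb" by (rule F5)
    also have "\<dots> \<approx> Pr [Sc a,kb]" by (rule E_sym, rule Pr2)
    finally show ?thesis .
  qed
  have "Tm (Tm ?C y) ?C \<approx> Pr ([X,ka,kb,X] @ y # [X,ka,kb,X])" by (rule sand[OF C])
  also have "\<dots> \<approx> Pr [X,ka,kb,y,X,X,ka,kb,X]"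
    by (rule Pr_swap'[OF c3, where pre="[X,ka,kb]" and post="[X,ka,kb,X]"]) simp_all
  also have "\<dots> \<approx> Pr [X,ka,kb,y,X,ka,kb,X]"
    by (rule Pr_repl'[OF P2[OF idem], where pre="[X,ka,kb,y]" and post="[ka,kb,X]"]) simp_all
  also have "\<dots> \<approx> Pr [X,kb,ka,y,X,ka,kb,X]"
    by (rule Pr_swap'[OF c1, where pre="[X]" and post="[y,X,ka,kb,X]"]) simp_all
  also have "\<dots> \<approx> Pr [X,kb,y,ka,X,ka,kb,X]"
    by (rule Pr_swap'[OF c2, where pre="[X,kb]" and post="[X,ka,kb,X]"]) simp_all
  also have "\<dots> \<approx> Pr [X,kb,y,Sc e,ka,Z,kb,X]"
    by (rule Pr_repl'[OF T3, where pre="[X,kb,y]" and post="[kb,X]"]) simp_all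
  also have "\<dots> \<approx> Tm (Sc e) (Pr [X,kb,y,ka,Z,kb,X])"
    by (rule Pr_sc'[where pre="[X,kb,y]" and post="[ka,Z,kb,X]"]) simp_all
  finally have h1: "Tm (Tm ?C y) ?C \<approx> Tm (Sc e) (Pr [X,kb,y,ka,Z,kb,X])" .
  have "Pr [X,kb,y,ka,Z,kb,X] \<approx> Pr [X,kb,ka,y,Z,kb,X]"
    by (rule Pr_swap'[OF E_sym[OF c2], where pre="[X,kb]" and post="[Z,kb,X]"]) simp_all
  also have "\<dots> \<approx> Pr [X,ka,kb,y,Z,kb,X]"
    by (rule Pr_swap'[OF E_sym[OF c1], where pre="[X]" and post="[y,Z,kb,X]"]) simp_all
  also have "\<dots> \<approx> Pr [X,ka,kb,Z,y,kb,X]"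
    by (rule Pr_swap'[OF E_sym[OF c4], where pre="[X,ka,kb]" and post="[kb,X]"]) simp_all
  also have "\<dots> \<approx> Pr [X,ka,Z,kb,y,kb,X]"
    by (rule Pr_swap'[OF E_sym[OF c5], where pre="[X,ka]" and post="[y,kb,X]"]) simp_all
  also have "\<dots> \<approx> Pr [X,ka,Z,Sc a,kb,X]"
    by (rule Pr_repl'[OF F5', where pre="[X,ka,Z]" and post="[X]"]) simp_all
  also have "\<dots> \<approx> Tm (Sc a) (Pr [X,ka,Z,kb,X])"
    by (rule Pr_sc'[where pre="[X,ka,Z]" and post="[kb,X]"]) simp_all
  finally have h2: "Pr [X,kb,y,ka,Z,kb,X] \<approx> Tm (Sc a) (Pr [X,ka,Z,kb,X])" .
  have "Pr [X,ka,Z,kb,X] \<approx> Pr [X,ka,kb,Z,X]"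
    by (rule Pr_swap'[OF c5, where pre="[X,ka]" and post="[X]"]) simp_all
  also have "\<dots> \<approx> Pr [X,ka,kb,X]"
    by (rule Pr_repl'[OF P2[OF F3], where pre="[X,ka,kb]" and post="[]"]) simp_all
  also have "\<dots> \<approx> ?C" by (rule Pr4)
  finally have h3: "Pr [X,ka,Z,kb,X] \<approx> ?C" .
  note h1
  also have "Tm (Sc e) (Pr [X,kb,y,ka,Z,kb,X]) \<approx> Tm (Sc e) (Tm (Sc a) ?C)"
    by (rule cTr, rule bmw_eq.trans[OF h2], rule cTr, rule h3)
  also have "\<dots> \<approx> Tm (Sc (e*a)) ?C" by (rule sc_mul)
  finally show ?thesis .
qed

lemma base_gen:
  assumes "Tm (Tm k y) k \<approx> Tm (Sc a) k"
  shows "Tm (Tm (Tm (Sc e) k) y) (Tm (Sc e) k) \<approx> Tm (Sc (e*a)) (Tm (Sc e) k)"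
proof -
  have "Tm (Tm (Tm (Sc e) k) y) (Tm (Sc e) k) \<approx> Tm (Tm (Sc e) (Tm k y)) (Tm (Sc e) k)"
    by (rule cTl, rule assoc)
  also have "\<dots> \<approx> Tm (Sc e) (Tm (Tm k y) (Tm (Sc e) k))" by (rule assoc)
  also have "\<dots> \<approx> Tm (Sc e) (Tm (Sc e) (Tm (Tm k y) k))" by (rule cTr, rule sc_pull_r)
  also have "\<dots> \<approx> Tm (Sc e) (Tm (Sc e) (Tm (Sc a) k))" by (rule cTr, rule cTr, rule assms)
  also have "\<dots> \<approx> Tm (Sc e) (Tm (Sc (e*a)) k)" by (rule cTr, rule sc_mul)
  also have "\<dots> \<approx> Tm (Sc (e*(e*a))) k" by (rule sc_mul)
  also have "\<dots> \<approx> Tm (Sc (e*a)) (Tm (Sc e) k)" by (rule E_sym, rule bmw_eq.trans[OF sc_mul], rule sc_eq, simp)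
  finally show ?thesis .
qed

lemma finish:
  assumes par: "q\<noteq>0" "q\<noteq>1" "q\<noteq>-1" "\<mu>\<noteq>0" and bz: "beta q \<mu> \<noteq> 0" and j: "1 \<le> j" "j+1<m"
  and H: "\<And>y a. okg {j+1} y \<Longrightarrow> Tm (Tm (bkappa q \<mu> j) y) (bkappa q \<mu> j) \<approx> Tm (Sc a) (bkappa q \<mu> j)
             \<Longrightarrow> Tm (Tm C y) C \<approx> Tm (Sc (1/beta q \<mu> * a)) C"
  shows "Tm C C \<approx> C \<and> Tm (Tm C (Sg (j+1))) C \<approx> Tm (Sc (1/(beta q \<mu>*\<mu>))) C
        \<and> Tm (Tm C (bkappa q \<mu> (j+1))) C \<approx> Tm (Sc (1/beta q \<mu>)) C"
proof (intro conjI)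
  let ?k = "bkappa q \<mu> j"
  have jm: "j < m" using j by simp
  have "Tm (Tm ?k (Sc 1)) ?k \<approx> Tm ?k ?k" by (rule cTl, rule bmw_eq.tm_one_r)
  also have "\<dots> \<approx> Tm (Sc (beta q \<mu>)) ?k" by (rule R1[OF j(1) jm])
  finally have "Tm (Tm C (Sc 1)) C \<approx> Tm (Sc (1/beta q \<mu> * beta q \<mu>)) C" by (intro H) simp_all
  then have "Tm (Tm C (Sc 1)) C \<approx> Tm (Sc 1) C" using bz by simp
  then have "Tm (Tm C (Sc 1)) C \<approx> C" by (rule bmw_eq.trans[OF _ sc_one])
  then show "Tm C C \<approx> C" by (rule bmw_eq.trans[OF cTl[OF E_sym[OF bmw_eq.tm_one_r]]])
  have "Tm (Tm C (Sg (j+1))) C \<approx> Tm (Sc (1/beta q \<mu> * (1/\<mu>))) C"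
    by (rule H, simp, rule bmw_eq.ksk_pos[OF j])
  then show "Tm (Tm C (Sg (j+1))) C \<approx> Tm (Sc (1/(beta q \<mu>*\<mu>))) C" by simp
  have "Tm (Tm C (bkappa q \<mu> (j+1))) C \<approx> Tm (Sc (1/beta q \<mu> * 1)) C"
    by (rule H, simp, rule bmw_eq.trans[OF R2[OF par j]], rule E_sym, rule sc_one)
  then show "Tm (Tm C (bkappa q \<mu> (j+1))) C \<approx> Tm (Sc (1/beta q \<mu>)) C" by simp
qed

lemma M:
  assumes par: "q\<noteq>0" "q\<noteq>1" "q\<noteq>-1" "\<mu>\<noteq>0" and bz: "beta q \<mu> \<noteq> 0"
  shows "1 \<le> i \<Longrightarrow> 2*i+k+1 \<le> m \<Longrightarrow>
     Tm (bshift k (bcontr q \<mu> i)) (bshift k (bcontr q \<mu> i)) \<approx> bshift k (bcontr q \<mu> i)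
   \<and> Tm (Tm (bshift k (bcontr q \<mu> i)) (Sg (2*i+k))) (bshift k (bcontr q \<mu> i))
        \<approx> Tm (Sc (1/(beta q \<mu>*\<mu>))) (bshift k (bcontr q \<mu> i))
   \<and> Tm (Tm (bshift k (bcontr q \<mu> i)) (bkappa q \<mu> (2*i+k))) (bshift k (bcontr q \<mu> i))
        \<approx> Tm (Sc (1/beta q \<mu>)) (bshift k (bcontr q \<mu> i))"
proof (induction i arbitrary: k rule: less_induct)
  case (less i)
  let ?e = "1 / beta q \<mu>"
  consider "i = 1" | n where "i = Suc (Suc n)" using less.prems(1)
    by (metis One_nat_def Suc_le_D Suc_le_lessD less_Suc_eq_0_disj not0_implies_Suc)
  then show ?case
  proof cases
    case 1
    let ?k = "bkappa q \<mu> (Suc k)"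
    have C: "bshift k (bcontr q \<mu> i) = Tm (Sc ?e) ?k" using 1 by simp
    have "Tm (bshift k (bcontr q \<mu> i)) (bshift k (bcontr q \<mu> i)) \<approx> bshift k (bcontr q \<mu> i)
   \<and> Tm (Tm (bshift k (bcontr q \<mu> i)) (Sg (Suc k+1))) (bshift k (bcontr q \<mu> i))
        \<approx> Tm (Sc (1/(beta q \<mu>*\<mu>))) (bshift k (bcontr q \<mu> i))
   \<and> Tm (Tm (bshift k (bcontr q \<mu> i)) (bkappa q \<mu> (Suc k+1))) (bshift k (bcontr q \<mu> i))
        \<approx> Tm (Sc (1/beta q \<mu>)) (bshift k (bcontr q \<mu> i))"
      using less.prems 1 unfolding C
      by (intro finish[OF par bz] base_gen) auto
    then show ?thesis using 1 by simp
  next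
    case 2
    define X where "X = bshift (Suc k) (bcontr q \<mu> (Suc n))"
    define Z where "Z = bshift (Suc (Suc k)) (bcontr q \<mu> n)"
    define ka where "ka = bkappa q \<mu> (Suc k)"
    define kb where "kb = bkappa q \<mu> (2*n+k+3)"
    have C: "bshift k (bcontr q \<mu> i) = Tm (Tm (Tm X ka) kb) X"
      unfolding X_def ka_def kb_def 2 by (simp add: eval_nat_numeral)
    have m: "2*n+k+5 \<le> m" using less.prems 2 by simp
    have IH1: "Tm X X \<approx> X"
      using less.IH[of "Suc n" "Suc k"] m 2 unfolding X_def by (simp add: eval_nat_numeral)
    have oX: "okg {k+2..<2*n+k+3} X" using okg_C[where k="Suc k" and i="Suc n" and q=q and \<mu>=\<mu>] unfolding X_def by (simp add: eval_nat_numeral)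
    have oZ: "okg {k+3..<2*n+k+2} Z" using okg_C[where k="Suc (Suc k)" and i=n and q=q and \<mu>=\<mu>] unfolding Z_def by (simp add: eval_nat_numeral)
    have oka: "okg {Suc k} ka" unfolding ka_def by simp
    have okb: "okg {2*n+k+3} kb" unfolding kb_def by simp
    have T: "Tm (Tm ka X) ka \<approx> Tm (Sc ?e) (Tm ka Z)"
    proof (cases n)
      case 0
      then have X1: "X = Tm (Sc ?e) (bkappa q \<mu> (Suc (Suc k)))" and Z1: "Z = Sc 1"
        unfolding X_def Z_def by simp_all
      have "Tm (Tm ka X) ka = sw ka (Tm (Sc ?e) (bkappa q \<mu> (Suc (Suc k))))" unfolding sw_def X1 ..
      also have "\<dots> \<approx> Tm (Sc ?e) (sw ka (bkappa q \<mu> (Suc (Suc k))))" by (rule sw_sc)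
      also have "\<dots> \<approx> Tm (Sc ?e) ka" unfolding sw_def ka_def
        by (rule cTr, rule R2[OF par, of "Suc k", simplified]) (use m in simp_all)
      also have "\<dots> \<approx> Tm (Sc ?e) (Tm ka Z)" unfolding Z1 by (rule cTr, rule E_sym, rule bmw_eq.tm_one_r)
      finally show ?thesis .
    next
      case (Suc n')
      define k2 where "k2 = bkappa q \<mu> (k+2)"
      define kc where "kc = bkappa q \<mu> (2*n'+k+4)"
      have XZ: "X = Tm (Tm (Tm Z k2) kc) Z" unfolding X_def Z_def k2_def kc_def Suc by (simp add: eval_nat_numeral)
      have IH2: "Tm (Tm Z kc) Z \<approx> Tm (Sc ?e) Z"
        using less.IH[of "Suc n'" "Suc (Suc k)"] m 2 Suc unfolding Z_def kc_def by (simp add: eval_nat_numeral)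
      have c1: "Tm ka Z \<approx> Tm Z ka" by (rule comm[OF oZ oka]) (use m in \<open>auto simp: far_def\<close>)
      have c2: "Tm kc ka \<approx> Tm ka kc" by (rule comm[OF oka]) (use m Suc in \<open>auto simp: far_def kc_def\<close>)
      have "Tm (Tm ka k2) ka \<approx> ka" unfolding ka_def k2_def
        using R2[OF par, of "Suc k"] m by (simp add: eval_nat_numeral)
      then have r2: "Pr [ka,k2,ka] \<approx> Pr [ka]"
        by (rule bmw_eq.trans[OF Pr3 bmw_eq.trans[OF _ E_sym[OF Pr1]]])
      have "Tm (Tm ka X) ka \<approx> Pr (ka # [Z,k2,kc,Z] @ [ka])"
        unfolding XZ by (rule sand2, rule E_sym, rule Pr4)
      also have "\<dots> \<approx> Pr [Z,ka,k2,kc,Z,ka]"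
        by (rule Pr_swap'[OF c1, where pre="[]" and post="[k2,kc,Z,ka]"]) simp_all
      also have "\<dots> \<approx> Pr [Z,ka,k2,kc,ka,Z]"
        by (rule Pr_swap'[OF E_sym[OF c1], where pre="[Z,ka,k2,kc]" and post="[]"]) simp_all
      also have "\<dots> \<approx> Pr [Z,ka,k2,ka,kc,Z]"
        by (rule Pr_swap'[OF c2, where pre="[Z,ka,k2]" and post="[Z]"]) simp_all
      also have "\<dots> \<approx> Pr [Z,ka,kc,Z]"
        by (rule Pr_repl'[OF r2, where pre="[Z]" and post="[kc,Z]"]) simp_all
      also have "\<dots> \<approx> Pr [ka,Z,kc,Z]"
        by (rule Pr_swap'[OF E_sym[OF c1], where pre="[]" and post="[kc,Z]"]) simp_all
      also have "\<dots> = Tm ka (Pr [Z,kc,Z])" by simp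
      also have "\<dots> \<approx> Tm ka (Tm (Sc ?e) Z)" by (rule cTr, rule bmw_eq.trans[OF Pr3 IH2])
      also have "\<dots> \<approx> Tm (Sc ?e) (Tm ka Z)" by (rule sc_pull_r)
      finally show ?thesis .
    qed
    have F3: "Tm Z X \<approx> X"
    proof (cases n)
      case 0
      then have "Z = Sc 1" unfolding Z_def by (simp add: eval_nat_numeral)
      then show ?thesis by (simp add: sc_one)
    next
      case (Suc n')
      define k2 where "k2 = bkappa q \<mu> (k+2)"
      define kc where "kc = bkappa q \<mu> (2*n'+k+4)"
      have XZ: "X = Tm (Tm (Tm Z k2) kc) Z" unfolding X_def Z_def k2_def kc_def Suc by (simp add: eval_nat_numeral)
      have IH2: "Tm Z Z \<approx> Z"
        using less.IH[of "Suc n'" "Suc (Suc k)"] m 2 Suc unfolding Z_def by (simp add: eval_nat_numeral)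
      have X4: "X \<approx> Pr [Z,k2,kc,Z]" unfolding XZ by (rule E_sym, rule Pr4)
      have "Tm Z X \<approx> Tm Z (Pr [Z,k2,kc,Z])" by (rule cTr, rule X4)
      also have "\<dots> = Pr [Z,Z,k2,kc,Z]" by simp
      also have "\<dots> \<approx> Pr [Z,k2,kc,Z]"
        by (rule Pr_repl'[OF bmw_eq.trans[OF Pr2 bmw_eq.trans[OF IH2 E_sym[OF Pr1]]], where pre="[]" and post="[k2,kc,Z]"]) simp_all
      also have "\<dots> \<approx> X" by (rule E_sym, rule X4)
      finally show ?thesis .
    qed
    have cab: "Tm ka kb \<approx> Tm kb ka" by (rule comm[OF okb oka]) (use m in \<open>auto simp: far_def\<close>)
    have cZb: "Tm Z kb \<approx> Tm kb Z" by (rule comm[OF okb oZ]) (use m in \<open>auto simp: far_def\<close>)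
    have H: "Tm (Tm (Tm (Tm (Tm X ka) kb) X) y) (Tm (Tm (Tm X ka) kb) X) \<approx> Tm (Sc (?e*a)) (Tm (Tm (Tm X ka) kb) X)"
      if oy: "okg {2*n+k+3+1} y" and F5: "Tm (Tm kb y) kb \<approx> Tm (Sc a) kb" for y a
    proof (rule step_gen[OF IH1 T F3 cab _ _ _ cZb F5])
      show "Tm ka y \<approx> Tm y ka" by (rule comm[OF oy oka]) (use m in \<open>auto simp: far_def\<close>)
      show "Tm X y \<approx> Tm y X" by (rule comm[OF oy oX]) (use m in \<open>auto simp: far_def\<close>)
      show "Tm Z y \<approx> Tm y Z" by (rule comm[OF oy oZ]) (use m in \<open>auto simp: far_def\<close>)
    qed
    have R: "Tm (bshift k (bcontr q \<mu> i)) (bshift k (bcontr q \<mu> i)) \<approx> bshift k (bcontr q \<mu> i)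
   \<and> Tm (Tm (bshift k (bcontr q \<mu> i)) (Sg (2*n+k+3+1))) (bshift k (bcontr q \<mu> i))
        \<approx> Tm (Sc (1/(beta q \<mu>*\<mu>))) (bshift k (bcontr q \<mu> i))
   \<and> Tm (Tm (bshift k (bcontr q \<mu> i)) (bkappa q \<mu> (2*n+k+3+1))) (bshift k (bcontr q \<mu> i))
        \<approx> Tm (Sc (1/beta q \<mu>)) (bshift k (bcontr q \<mu> i))"
      unfolding C
    proof (rule finish[OF par bz])
      show "1 \<le> 2*n+k+3" by simp
      show "2*n+k+3+1 < m" using m by simp
      fix y a assume "okg {2*n+k+3+1} y" "Tm (Tm (bkappa q \<mu> (2*n+k+3)) y) (bkappa q \<mu> (2*n+k+3)) \<approx> Tm (Sc a) (bkappa q \<mu> (2*n+k+3))"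
      then show "Tm (Tm (Tm (Tm (Tm X ka) kb) X) y) (Tm (Tm (Tm X ka) kb) X) \<approx> Tm (Sc (?e*a)) (Tm (Tm (Tm X ka) kb) X)"
        by (intro H) (simp_all add: kb_def)
    qed
    have e: "2*i+k = 2*n+k+3+1" using 2 by simp
    show ?thesis unfolding e by (rule R)
  qed
qed

end
theorem lemmaA2:
  fixes q \<mu> :: complex and i m :: nat
  assumes "q \<noteq> 0" "q \<noteq> 1" "q \<noteq> -1"
    and "\<mu> \<noteq> 0" "\<mu> \<noteq> q" "\<mu> \<noteq> - (1/q)"
    and "1 \<le> i" "2 * i + 1 \<le> m"
  shows "bmw_eq q \<mu> m (Tm (Tm (bcontr q \<mu> i) (Sg (2*i))) (bcontr q \<mu> i))
           (Tm (Sc (1 / (beta q \<mu> * \<mu>))) (bcontr q \<mu> i))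
       \<and> bmw_eq q \<mu> m (Tm (Tm (bcontr q \<mu> i) (bkappa q \<mu> (2*i))) (bcontr q \<mu> i))
           (Tm (Sc (1 / beta q \<mu>)) (bcontr q \<mu> i))"
proof -
  have qq: "q - 1/q \<noteq> 0"
  proof
    assume "q - 1/q = 0"
    then have "q * q = 1" using assms(1) by (simp add: field_simps)
    then have "(q - 1) * (q + 1) = 0" by (simp add: algebra_simps)
    then show False using assms(2,3) by (auto simp: add_eq_0_iff neg_equal_iff_equal minus_equation_iff)
  qed
  have a: "q - \<mu> \<noteq> 0" using assms(5) by simp
  have b: "1/q + \<mu> \<noteq> 0" using assms(6) by (auto simp: add_eq_0_iff)
  have bz: "beta q \<mu> \<noteq> 0" unfolding beta_def using a b qq assms(4) by simp
  have "bmw_eq q \<mu> m (Tm (bshift 0 (bcontr q \<mu> i)) (bshift 0 (bcontr q \<mu> i))) (bshift 0 (bcontr q \<mu> i))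
   \<and> bmw_eq q \<mu> m (Tm (Tm (bshift 0 (bcontr q \<mu> i)) (Sg (2*i+0))) (bshift 0 (bcontr q \<mu> i)))
        (Tm (Sc (1/(beta q \<mu>*\<mu>))) (bshift 0 (bcontr q \<mu> i)))
   \<and> bmw_eq q \<mu> m (Tm (Tm (bshift 0 (bcontr q \<mu> i)) (bkappa q \<mu> (2*i+0))) (bshift 0 (bcontr q \<mu> i)))
        (Tm (Sc (1/beta q \<mu>)) (bshift 0 (bcontr q \<mu> i)))"
    by (rule M[OF assms(1-4) bz]) (use assms(7,8) in simp_all)
  then show ?thesis by simp
qed

end
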